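(* Let $k$ be a field of characteristic zero and ${\boldsymbol\lambda}\in M_n(k)$ antisymmetric. Then $k_{\boldsymbol\lambda}(x_1,\dots,x_n)$ is not isomorphic (as a Poisson algebra over $k$) to a Poisson-Weyl field. In fact, it is not isomorphic to any Poisson field containing elements $x,y$ with $\{x,y\}=1$.
   Context: $k_{\boldsymbol\lambda}(x_1,\dots,x_n)$ is the rational function field $k(x_1,\dots,x_n)$ with the unique Poisson bracket with $\{x_i,x_j\}=\lambda_{ij}x_ix_j$. A Poisson-Weyl field is a rational function field $L(u_1,\dots,u_m,v_1,\dots,v_m)$, with $m\ge1$ and $L$ a field extension of $k$, equipped with the unique $L$-linear Poisson bracket satisfying $\{u_i,u_j\}=\{v_i,v_j\}=0$ and $\{u_i,v_j\}=\delta_{ij}$ for all $i,j$. *)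

theory Defs
  imports Main
begin

text \<open>A field F together with an embedding of the base field k (F is a k-algebra).\<close>
definition field_embedding :: "('k::field \<Rightarrow> 'a::field) \<Rightarrow> bool" where
  "field_embedding \<iota> \<longleftrightarrow> \<iota> 1 = 1 \<and> (\<forall>a b. \<iota> (a + b) = \<iota> a + \<iota> b) \<and> (\<forall>a b. \<iota> (a * b) = \<iota> a * \<iota> b)"

definition monom_eval :: "nat \<Rightarrow> (nat \<Rightarrow> 'a::comm_ring_1) \<Rightarrow> (nat \<Rightarrow> nat) \<Rightarrow> 'a" where
  "monom_eval n x m = (\<Prod>i<n. x i ^ m i)"

definition poly_eval :: "('k \<Rightarrow> 'a::comm_ring_1) \<Rightarrow> nat \<Rightarrow> (nat \<Rightarrow> 'a) \<Rightarrow> (nat \<Rightarrow> nat) set \<Rightarrow> ((nat \<Rightarrow> nat) \<Rightarrow> 'k) \<Rightarrow> 'a" where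
  "poly_eval \<iota> n x M c = (\<Sum>m\<in>M. \<iota> (c m) * monom_eval n x m)"

definition exponents :: "nat \<Rightarrow> (nat \<Rightarrow> nat) set" where
  "exponents n = {m. \<forall>i\<ge>n. m i = 0}"

text \<open>F = k(x_0,...,x_{n-1}): x algebraically independent over k and every element of F
  is a quotient of two polynomials in the x_i with coefficients in k.\<close>
definition rational_function_field :: "('k::field \<Rightarrow> 'a::field) \<Rightarrow> nat \<Rightarrow> (nat \<Rightarrow> 'a) \<Rightarrow> bool" where
  "rational_function_field \<iota> n x \<longleftrightarrow>
     field_embedding \<iota> \<and>
     (\<forall>M c. finite M \<and> M \<subseteq> exponents n \<and> poly_eval \<iota> n x M c = 0 \<longrightarrow> (\<forall>m\<in>M. c m = 0)) \<and>
     (\<forall>f. \<exists>M c N d. finite M \<and> M \<subseteq> exponents n \<and> finite N \<and> N \<subseteq> exponents n \<and>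
            poly_eval \<iota> n x N d \<noteq> 0 \<and> f = poly_eval \<iota> n x M c / poly_eval \<iota> n x N d)"

definition poisson_bracket :: "('k::field \<Rightarrow> 'a::field) \<Rightarrow> ('a \<Rightarrow> 'a \<Rightarrow> 'a) \<Rightarrow> bool" where
  "poisson_bracket \<iota> br \<longleftrightarrow>
     (\<forall>a b c. br (a + b) c = br a c + br b c) \<and>
     (\<forall>t a b. br (\<iota> t * a) b = \<iota> t * br a b) \<and>
     (\<forall>a b. br a b = - br b a) \<and>
     (\<forall>a b c. br a (br b c) + br b (br c a) + br c (br a b) = 0) \<and>
     (\<forall>a b c. br a (b * c) = br a b * c + b * br a c)"

definition poisson_field :: "('k::field \<Rightarrow> 'a::field) \<Rightarrow> ('a \<Rightarrow> 'a \<Rightarrow> 'a) \<Rightarrow> bool" where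
  "poisson_field \<iota> br \<longleftrightarrow> field_embedding \<iota> \<and> poisson_bracket \<iota> br"

definition poisson_iso :: "('k \<Rightarrow> 'a::field) \<Rightarrow> ('a \<Rightarrow> 'a \<Rightarrow> 'a) \<Rightarrow> ('k \<Rightarrow> 'b::field) \<Rightarrow> ('b \<Rightarrow> 'b \<Rightarrow> 'b) \<Rightarrow> ('a \<Rightarrow> 'b) \<Rightarrow> bool" where
  "poisson_iso \<iota>1 br1 \<iota>2 br2 \<phi> \<longleftrightarrow>
     bij \<phi> \<and> (\<forall>a b. \<phi> (a + b) = \<phi> a + \<phi> b) \<and> (\<forall>a b. \<phi> (a * b) = \<phi> a * \<phi> b) \<and>
     (\<forall>t. \<phi> (\<iota>1 t) = \<iota>2 t) \<and> (\<forall>a b. \<phi> (br1 a b) = br2 (\<phi> a) (\<phi> b))"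

definition lambda_bracket :: "('k \<Rightarrow> 'a::field) \<Rightarrow> nat \<Rightarrow> (nat \<Rightarrow> 'a) \<Rightarrow> (nat \<Rightarrow> nat \<Rightarrow> 'k) \<Rightarrow> ('a \<Rightarrow> 'a \<Rightarrow> 'a) \<Rightarrow> bool" where
  "lambda_bracket \<iota> n x lam br \<longleftrightarrow> (\<forall>i<n. \<forall>j<n. br (x i) (x j) = \<iota> (lam i j) * x i * x j)"

end

theory Submission
  imports Defs "HOL-Computational_Algebra.Formal_Laurent_Series"
begin

unbundle fps_syntax


definition rhom :: "('a::comm_ring_1 \<Rightarrow> 'b::comm_ring_1) \<Rightarrow> bool" where
  "rhom h \<longleftrightarrow> h 1 = 1 \<and> (\<forall>a b. h (a + b) = h a + h b) \<and> (\<forall>a b. h (a * b) = h a * h b)"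

lemma rhomD:
  assumes "rhom h"
  shows "h 1 = 1" "h (a + b) = h a + h b" "h (a * b) = h a * h b"
  using assms by (auto simp: rhom_def)

lemma rhom_0: assumes "rhom h" shows "h 0 = 0"
  using rhomD(2)[OF assms, of 0 0] by simp

lemma rhom_uminus: assumes "rhom h" shows "h (- a) = - h a"
  using rhomD(2)[OF assms, of a "-a"] rhom_0[OF assms] by (metis add.right_inverse neg_eq_iff_add_eq_0)

lemma rhom_diff: assumes "rhom h" shows "h (a - b) = h a - h b"
  using rhomD(2)[OF assms, of a "-b"] rhom_uminus[OF assms] by simp

lemma rhom_sum: assumes "rhom h" shows "h (\<Sum>i\<in>A. f i) = (\<Sum>i\<in>A. h (f i))"
proof (cases "finite A")
  case True thus ?thesis by induct (auto simp: rhom_0[OF assms] rhomD[OF assms])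
qed (simp add: rhom_0[OF assms])

lemma rhom_prod: assumes "rhom h" shows "h (\<Prod>i\<in>A. f i) = (\<Prod>i\<in>A. h (f i))"
proof (cases "finite A")
  case True thus ?thesis by induct (auto simp: rhomD[OF assms])
qed (simp add: rhomD[OF assms])

lemma rhom_power: assumes "rhom h" shows "h (a ^ k) = h a ^ k"
  by (induct k) (auto simp: rhomD[OF assms])

lemma rhom_comp: "rhom h \<Longrightarrow> rhom g \<Longrightarrow> rhom (g \<circ> h)"
  by (auto simp: rhom_def)

lemma field_embedding_rhom: "field_embedding \<iota> = rhom \<iota>"
  by (simp add: field_embedding_def rhom_def)

lemma poly_eval_hom:
  assumes "rhom h"
  shows "h (poly_eval e n y M c) = poly_eval (h \<circ> e) n (h \<circ> y) M c"
  unfolding poly_eval_def monom_eval_def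
  by (simp add: rhom_sum[OF assms] rhomD[OF assms] rhom_prod[OF assms] rhom_power[OF assms])

lemma poly_eval_ext:
  assumes "rhom e" "finite N" "M \<subseteq> N"
  shows "poly_eval e n y N (\<lambda>m. if m \<in> M then c m else 0) = poly_eval e n y M c"
  unfolding poly_eval_def
  using assms by (intro sum.mono_neutral_cong_right) (auto simp: rhom_0)

definition padd :: "(nat \<Rightarrow> nat) set \<Rightarrow> ((nat \<Rightarrow> nat) \<Rightarrow> 'k::comm_ring_1) \<Rightarrow> (nat \<Rightarrow> nat) set \<Rightarrow> ((nat \<Rightarrow> nat) \<Rightarrow> 'k) \<Rightarrow> (nat \<Rightarrow> nat) \<Rightarrow> 'k" where
  "padd M c N d = (\<lambda>m. (if m \<in> M then c m else 0) + (if m \<in> N then d m else 0))"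

lemma poly_eval_add:
  assumes "rhom e" "finite M" "finite N"
  shows "poly_eval e n y (M \<union> N) (padd M c N d) = poly_eval e n y M c + poly_eval e n y N d"
proof -
  have "poly_eval e n y (M \<union> N) (padd M c N d) =
     poly_eval e n y (M \<union> N) (\<lambda>m. if m \<in> M then c m else 0) + poly_eval e n y (M \<union> N) (\<lambda>m. if m \<in> N then d m else 0)"
    unfolding poly_eval_def padd_def by (simp add: rhomD[OF assms(1)] distrib_right sum.distrib)
  thus ?thesis using poly_eval_ext[OF assms(1), of "M \<union> N"] assms by simp
qed

lemma poly_eval_neg:
  assumes "rhom e"
  shows "poly_eval e n y M (\<lambda>m. - c m) = - poly_eval e n y M c"
  unfolding poly_eval_def by (simp add: rhom_uminus[OF assms] sum_negf)

lemma monom_eval_add: "monom_eval n y (\<lambda>i. m i + l i) = monom_eval n y m * monom_eval n y l"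
  unfolding monom_eval_def by (simp add: power_add prod.distrib)

definition pmulS :: "(nat \<Rightarrow> nat) set \<Rightarrow> (nat \<Rightarrow> nat) set \<Rightarrow> (nat \<Rightarrow> nat) set" where
  "pmulS M N = (\<lambda>(m, l). (\<lambda>i. m i + l i)) ` (M \<times> N)"

definition pmul :: "(nat \<Rightarrow> nat) set \<Rightarrow> ((nat \<Rightarrow> nat) \<Rightarrow> 'k::comm_ring_1) \<Rightarrow> (nat \<Rightarrow> nat) set \<Rightarrow> ((nat \<Rightarrow> nat) \<Rightarrow> 'k) \<Rightarrow> (nat \<Rightarrow> nat) \<Rightarrow> 'k" where
  "pmul M c N d = (\<lambda>s. \<Sum>p\<in>{p \<in> M \<times> N. (\<lambda>i. fst p i + snd p i) = s}. c (fst p) * d (snd p))"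

lemma poly_eval_mul:
  assumes "rhom e" "finite M" "finite N"
  shows "poly_eval e n y (pmulS M N) (pmul M c N d) = poly_eval e n y M c * poly_eval e n y N d"
proof -
  let ?g = "\<lambda>p. (\<lambda>i::nat. fst p i + snd p i)"
  let ?h = "\<lambda>p. e (c (fst p)) * e (d (snd p)) * monom_eval n y (?g p)"
  have "poly_eval e n y M c * poly_eval e n y N d = (\<Sum>p\<in>M \<times> N. ?h p)"
    unfolding poly_eval_def sum_product sum.cartesian_product monom_eval_add
    by (intro sum.cong) (auto simp: ac_simps)
  also have "\<dots> = (\<Sum>s\<in>pmulS M N. \<Sum>p\<in>{p \<in> M \<times> N. ?g p = s}. ?h p)"
    using assms by (intro sum.group[symmetric]) (auto simp: pmulS_def)
  also have "\<dots> = poly_eval e n y (pmulS M N) (pmul M c N d)"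
    unfolding poly_eval_def pmul_def
    by (intro sum.cong refl) (auto simp: rhom_sum[OF assms(1)] rhomD[OF assms(1)] sum_distrib_right intro!: sum.cong)
  finally show ?thesis by simp
qed

lemma pmulS_exps: "M \<subseteq> exponents n \<Longrightarrow> N \<subseteq> exponents n \<Longrightarrow> pmulS M N \<subseteq> exponents n"
  by (auto simp: pmulS_def exponents_def)

lemma pmulS_finite: "finite M \<Longrightarrow> finite N \<Longrightarrow> finite (pmulS M N)"
  by (simp add: pmulS_def)



locale rff =
  fixes \<iota> :: "'k::field \<Rightarrow> 'f::field" and n :: nat and x :: "nat \<Rightarrow> 'f"
  assumes R: "rational_function_field \<iota> n x"
begin

lemma iota_rhom: "rhom \<iota>"
  using R by (simp add: rational_function_field_def field_embedding_rhom)

lemma indep: "finite M \<Longrightarrow> M \<subseteq> exponents n \<Longrightarrow> poly_eval \<iota> n x M c = 0 \<Longrightarrow> m \<in> M \<Longrightarrow> c m = 0"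
  using R unfolding rational_function_field_def by blast

lemma repr: "\<exists>M c N d. finite M \<and> M \<subseteq> exponents n \<and> finite N \<and> N \<subseteq> exponents n \<and>
            poly_eval \<iota> n x N d \<noteq> 0 \<and> f = poly_eval \<iota> n x M c / poly_eval \<iota> n x N d"
  using R unfolding rational_function_field_def by blast

definition PR :: "('k \<Rightarrow> 'a::comm_ring_1) \<Rightarrow> (nat \<Rightarrow> 'a) \<Rightarrow> ('f \<times> 'a) set" where
  "PR e y = {(poly_eval \<iota> n x M c, poly_eval e n y M c) | M c. finite M \<and> M \<subseteq> exponents n}"

lemma PR_add: assumes "rhom e" "(a, b) \<in> PR e y" "(a', b') \<in> PR e y"
  shows "(a + a', b + b') \<in> PR e y"
proof -
  obtain M c where 1: "finite M" "M \<subseteq> exponents n" "a = poly_eval \<iota> n x M c" "b = poly_eval e n y M c"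
    using assms(2) by (auto simp: PR_def)
  obtain N d where 2: "finite N" "N \<subseteq> exponents n" "a' = poly_eval \<iota> n x N d" "b' = poly_eval e n y N d"
    using assms(3) by (auto simp: PR_def)
  show ?thesis unfolding PR_def
    by (rule CollectI, rule exI[of _ "M \<union> N"], rule exI[of _ "padd M c N d"])
       (use 1 2 poly_eval_add[OF iota_rhom] poly_eval_add[OF assms(1)] in auto)
qed

lemma PR_neg: assumes "rhom e" "(a, b) \<in> PR e y"
  shows "(- a, - b) \<in> PR e y"
proof -
  obtain M c where 1: "finite M" "M \<subseteq> exponents n" "a = poly_eval \<iota> n x M c" "b = poly_eval e n y M c"
    using assms(2) by (auto simp: PR_def)
  show ?thesis unfolding PR_def
    by (rule CollectI, rule exI[of _ "M"], rule exI[of _ "\<lambda>m. - c m"])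
       (use 1 poly_eval_neg[OF iota_rhom] poly_eval_neg[OF assms(1)] in auto)
qed

lemma PR_mul: assumes "rhom e" "(a, b) \<in> PR e y" "(a', b') \<in> PR e y"
  shows "(a * a', b * b') \<in> PR e y"
proof -
  obtain M c where 1: "finite M" "M \<subseteq> exponents n" "a = poly_eval \<iota> n x M c" "b = poly_eval e n y M c"
    using assms(2) by (auto simp: PR_def)
  obtain N d where 2: "finite N" "N \<subseteq> exponents n" "a' = poly_eval \<iota> n x N d" "b' = poly_eval e n y N d"
    using assms(3) by (auto simp: PR_def)
  show ?thesis unfolding PR_def
    by (rule CollectI, rule exI[of _ "pmulS M N"], rule exI[of _ "pmul M c N d"])
       (use 1 2 poly_eval_mul[OF iota_rhom] poly_eval_mul[OF assms(1)] pmulS_exps pmulS_finite in auto)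
qed

lemma PR_zero: assumes "rhom e" "(0, b) \<in> PR e y" shows "b = 0"
proof -
  obtain M c where 1: "finite M" "M \<subseteq> exponents n" "0 = poly_eval \<iota> n x M c" "b = poly_eval e n y M c"
    using assms(2) by (auto simp: PR_def)
  have "\<forall>m\<in>M. c m = 0" using indep[OF 1(1,2) 1(3)[symmetric]] by blast
  thus ?thesis using 1(4) by (simp add: poly_eval_def rhom_0[OF assms(1)])
qed

lemma PR_fun: assumes "rhom e" "(a, b) \<in> PR e y" "(a, b') \<in> PR e y" shows "b = b'"
proof -
  have "(0, b + - b') \<in> PR e y" using PR_add[OF assms(1) assms(2) PR_neg[OF assms(1) assms(3)]] by simp
  from PR_zero[OF assms(1) this] show ?thesis by simp
qed

lemma PR_one: assumes "rhom e" shows "(1, 1) \<in> PR e y"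
  unfolding PR_def
  by (rule CollectI, rule exI[of _ "{\<lambda>_. 0}"], rule exI[of _ "\<lambda>_. 1"])
     (auto simp: poly_eval_def monom_eval_def rhomD[OF assms] rhomD[OF iota_rhom] exponents_def)

lemma PR_const: assumes "rhom e" shows "(\<iota> t, e t) \<in> PR e y"
  unfolding PR_def
  by (rule CollectI, rule exI[of _ "{\<lambda>_. 0}"], rule exI[of _ "\<lambda>_. t"])
     (auto simp: poly_eval_def monom_eval_def exponents_def)

lemma PR_var: assumes "rhom e" "i < n" shows "(x i, y i) \<in> PR e y"
proof -
  let ?m = "\<lambda>l. if l = i then 1 else (0::nat)"
  have 1: "monom_eval n z ?m = z i" for z :: "nat \<Rightarrow> 'b::comm_ring_1"
    unfolding monom_eval_def using assms(2)
    by (simp add: power_0 prod.delta' if_distrib cong: if_cong)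
  show ?thesis unfolding PR_def
    by (rule CollectI, rule exI[of _ "{?m}"], rule exI[of _ "\<lambda>_. 1"])
       (use assms(2) in \<open>auto simp: poly_eval_def 1 rhomD[OF assms(1)] rhomD[OF iota_rhom] exponents_def\<close>)
qed

lemma PR_repr: "\<exists>p p' q q'. (p, p') \<in> PR e y \<and> (q, q') \<in> PR e y \<and> q \<noteq> 0 \<and> f = p / q"
  using repr[of f] unfolding PR_def by blast

end



lemma inv_unique: "(u::'a::comm_ring_1) * v = 1 \<Longrightarrow> u * w = 1 \<Longrightarrow> v = w"
  by (metis mult.assoc mult.commute mult_1_left)

locale rff_ext = rff \<iota> n x for \<iota> :: "'k::field \<Rightarrow> 'f::field" and n x +
  fixes e :: "'k \<Rightarrow> 'a::{comm_ring_1,inverse}" and y :: "nat \<Rightarrow> 'a"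
  assumes e_rhom: "rhom e"
    and U: "\<And>q q'. (q, q') \<in> PR e y \<Longrightarrow> q \<noteq> 0 \<Longrightarrow> q' * inverse q' = 1"
begin

definition ext :: "'f \<Rightarrow> 'a" where
  "ext f = (SOME v. \<exists>p p' q q'. (p, p') \<in> PR e y \<and> (q, q') \<in> PR e y \<and> q \<noteq> 0 \<and> f = p / q \<and> v = p' * inverse q')"

lemma ext_eq:
  assumes "(p, p') \<in> PR e y" "(q, q') \<in> PR e y" "q \<noteq> 0"
  shows "ext (p / q) = p' * inverse q'"
proof -
  define P where "P = (\<lambda>v. \<exists>p0 p0' q0 q0'. (p0, p0') \<in> PR e y \<and> (q0, q0') \<in> PR e y \<and> q0 \<noteq> 0 \<and> p / q = p0 / q0 \<and> v = p0' * inverse q0')"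
  have "\<exists>v. P v" unfolding P_def using assms by blast
  hence "P (SOME v. P v)" by (rule someI_ex)
  hence "\<exists>p0 p0' q0 q0'. (p0, p0') \<in> PR e y \<and> (q0, q0') \<in> PR e y \<and> q0 \<noteq> 0 \<and> p / q = p0 / q0 \<and> ext (p / q) = p0' * inverse q0'"
    unfolding P_def ext_def .
  then obtain p0 p0' q0 q0' where h: "(p0, p0') \<in> PR e y" "(q0, q0') \<in> PR e y" "q0 \<noteq> 0" "p / q = p0 / q0"
     "ext (p / q) = p0' * inverse q0'" by blast
  have "p0 * q = p * q0" using h(3,4) assms(3) by (simp add: field_simps)
  hence eq: "p0' * q' = p' * q0'"
    using PR_fun[OF e_rhom PR_mul[OF e_rhom h(1) assms(2)]] PR_mul[OF e_rhom assms(1) h(2)] by metis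
  have u1: "q' * inverse q' = 1" using U assms(2,3) .
  have u2: "q0' * inverse q0' = 1" using U h(2,3) .
  have "p0' * inverse q0' = p0' * inverse q0' * (q' * inverse q')" using u1 by simp
  also have "\<dots> = (p0' * q') * inverse q0' * inverse q'" by (simp add: ac_simps)
  also have "\<dots> = p' * (q0' * inverse q0') * inverse q'" by (simp add: eq ac_simps)
  finally show ?thesis using h(5) u2 by simp
qed

lemma ext_poly: assumes "(p, p') \<in> PR e y" shows "ext p = p'"
proof -
  have "ext (p / 1) = p' * inverse 1" using ext_eq[OF assms PR_one[OF e_rhom]] by simp
  moreover have "(1::'a) * inverse 1 = 1" using U[OF PR_one[OF e_rhom]] by simp
  ultimately show ?thesis by simp
qed

lemma ext_rep: "\<exists>p p' q q'. (p, p') \<in> PR e y \<and> (q, q') \<in> PR e y \<and> q \<noteq> 0 \<and> f = p / q \<and> ext f = p' * inverse q'"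
  using PR_repr[of e y f] ext_eq by blast

lemma ext_add: "ext (f + g) = ext f + ext g"
proof -
  obtain p p' q q' where f: "(p, p') \<in> PR e y" "(q, q') \<in> PR e y" "q \<noteq> 0" "f = p / q" "ext f = p' * inverse q'"
    using ext_rep by blast
  obtain r r' s s' where g: "(r, r') \<in> PR e y" "(s, s') \<in> PR e y" "s \<noteq> 0" "g = r / s" "ext g = r' * inverse s'"
    using ext_rep by blast
  have qs: "(q * s, q' * s') \<in> PR e y" using PR_mul[OF e_rhom f(2) g(2)] .
  have num: "(p * s + r * q, p' * s' + r' * q') \<in> PR e y"
    using PR_add[OF e_rhom PR_mul[OF e_rhom f(1) g(2)] PR_mul[OF e_rhom g(1) f(2)]] .
  have "f + g = (p * s + r * q) / (q * s)" using f g by (simp add: field_simps)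
  hence "ext (f + g) = (p' * s' + r' * q') * inverse (q' * s')" using ext_eq[OF num qs] f(3) g(3) by simp
  moreover have "inverse (q' * s') = inverse q' * inverse s'"
  proof (rule inv_unique[symmetric])
    show "q' * s' * inverse (q' * s') = 1" using U[OF qs] f(3) g(3) by simp
    show "q' * s' * (inverse q' * inverse s') = 1" using U[OF f(2,3)] U[OF g(2,3)]
      by (metis mult.assoc mult.left_commute mult_1_right)
  qed
  ultimately show ?thesis using f(5) g(5) U[OF f(2,3)] U[OF g(2,3)]
    by (simp add: algebra_simps) (metis mult.assoc mult.commute mult_1_right)
qed

lemma ext_mul: "ext (f * g) = ext f * ext g"
proof -
  obtain p p' q q' where f: "(p, p') \<in> PR e y" "(q, q') \<in> PR e y" "q \<noteq> 0" "f = p / q" "ext f = p' * inverse q'"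
    using ext_rep by blast
  obtain r r' s s' where g: "(r, r') \<in> PR e y" "(s, s') \<in> PR e y" "s \<noteq> 0" "g = r / s" "ext g = r' * inverse s'"
    using ext_rep by blast
  have qs: "(q * s, q' * s') \<in> PR e y" using PR_mul[OF e_rhom f(2) g(2)] .
  have num: "(p * r, p' * r') \<in> PR e y" using PR_mul[OF e_rhom f(1) g(1)] .
  have "f * g = (p * r) / (q * s)" using f g by (simp add: field_simps)
  hence "ext (f * g) = (p' * r') * inverse (q' * s')" using ext_eq[OF num qs] f(3) g(3) by simp
  moreover have "inverse (q' * s') = inverse q' * inverse s'"
  proof (rule inv_unique[symmetric])
    show "q' * s' * inverse (q' * s') = 1" using U[OF qs] f(3) g(3) by simp
    show "q' * s' * (inverse q' * inverse s') = 1" using U[OF f(2,3)] U[OF g(2,3)]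
      by (metis mult.assoc mult.left_commute mult_1_right)
  qed
  ultimately show ?thesis using f(5) g(5) by (simp add: ac_simps)
qed

lemma ext_one: "ext 1 = 1" using ext_poly[OF PR_one[OF e_rhom]] .

lemma ext_rhom: "rhom ext"
  unfolding rhom_def using ext_one ext_add ext_mul by blast

lemma ext_const: "ext (\<iota> t) = e t" using ext_poly[OF PR_const[OF e_rhom]] .

lemma ext_var: "i < n \<Longrightarrow> ext (x i) = y i" using ext_poly[OF PR_var[OF e_rhom]] .

end



definition pder :: "('f::comm_ring_1 \<Rightarrow> 'a::comm_ring_1) \<Rightarrow> ('f \<Rightarrow> 'a) \<Rightarrow> bool" where
  "pder \<psi> \<delta> \<longleftrightarrow> (\<forall>a b. \<delta> (a + b) = \<delta> a + \<delta> b) \<and> (\<forall>a b. \<delta> (a * b) = \<psi> a * \<delta> b + \<psi> b * \<delta> a)"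

lemma pderD: assumes "pder \<psi> \<delta>"
  shows "\<delta> (a + b) = \<delta> a + \<delta> b" "\<delta> (a * b) = \<psi> a * \<delta> b + \<psi> b * \<delta> a"
  using assms by (auto simp: pder_def)

lemma pder_0: assumes "pder \<psi> \<delta>" shows "\<delta> 0 = 0"
  using pderD(1)[OF assms, of 0 0] by simp

lemma pder_sum: assumes "pder \<psi> \<delta>" shows "\<delta> (\<Sum>i\<in>A. f i) = (\<Sum>i\<in>A. \<delta> (f i))"
proof (cases "finite A")
  case True thus ?thesis by induct (auto simp: pder_0[OF assms] pderD[OF assms])
qed (simp add: pder_0[OF assms])

lemma pder_uminus: assumes "pder \<psi> \<delta>" shows "\<delta> (- a) = - \<delta> a"
  using pderD(1)[OF assms, of a "-a"] pder_0[OF assms] by (metis add.right_inverse neg_eq_iff_add_eq_0)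

lemma pder_diff: assumes "pder \<psi> \<delta>" shows "\<delta> (a - b) = \<delta> a - \<delta> b"
  using pderD(1)[OF assms, of a "-b"] pder_uminus[OF assms] by simp

lemma pder_minus: "pder \<psi> d1 \<Longrightarrow> pder \<psi> d2 \<Longrightarrow> pder \<psi> (\<lambda>a. d1 a - d2 a)"
  unfolding pder_def by (auto simp: algebra_simps)

lemma rhom_field_nz: assumes "rhom (\<psi>::'f::field \<Rightarrow> 'a::field)" "q \<noteq> 0" shows "\<psi> q \<noteq> 0"
proof
  assume "\<psi> q = 0"
  hence "\<psi> (q * inverse q) = 0" by (simp add: rhomD[OF assms(1)])
  thus False using assms by (simp add: rhomD[OF assms(1)])
qed

context rff
begin

lemma der_unique:
  fixes \<psi> :: "'f \<Rightarrow> 'a::field"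
  assumes "rhom \<psi>" "pder \<psi> \<delta>" "\<And>t. \<delta> (\<iota> t) = 0" "\<And>i. i < n \<Longrightarrow> \<delta> (x i) = 0"
  shows "\<delta> f = 0"
proof -
  have "\<delta> (1 * 1) = \<psi> 1 * \<delta> 1 + \<psi> 1 * \<delta> 1" using pderD(2)[OF assms(2), of 1 1] .
  hence "\<delta> 1 = \<delta> 1 + \<delta> 1" by (simp add: rhomD[OF assms(1)])
  hence one: "\<delta> 1 = 0" by (metis add_cancel_right_right)
  have pw: "\<delta> (a ^ k) = 0" if "\<delta> a = 0" for a k
    using that by (induct k) (auto simp: pderD[OF assms(2)] one)
  have mon: "\<delta> (\<Prod>i\<in>A. x i ^ m i) = 0" if "A \<subseteq> {..<n}" for A m
  proof (cases "finite A")
    case True thus ?thesis using that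
      by induct (auto simp: one pderD[OF assms(2)] pw assms(4))
  qed (simp add: one)
  have poly: "\<delta> (poly_eval \<iota> n x M c) = 0" for M c
    unfolding poly_eval_def monom_eval_def
    by (simp add: pder_sum[OF assms(2)] pderD[OF assms(2)] assms(3) mon)
  obtain M c N d where r: "poly_eval \<iota> n x N d \<noteq> 0" "f = poly_eval \<iota> n x M c / poly_eval \<iota> n x N d"
    using repr[of f] by blast
  have eq: "poly_eval \<iota> n x M c = f * poly_eval \<iota> n x N d" using r by simp
  have "\<delta> (poly_eval \<iota> n x M c) = \<delta> (f * poly_eval \<iota> n x N d)" by (subst eq) (rule refl)
  hence "0 = \<psi> f * 0 + \<psi> (poly_eval \<iota> n x N d) * \<delta> f"
    by (simp only: poly pderD[OF assms(2)])
  thus ?thesis using rhom_field_nz[OF assms(1) r(1)] by simp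
qed

lemma der_unique2:
  fixes \<psi> :: "'f \<Rightarrow> 'a::field"
  assumes "rhom \<psi>" "pder \<psi> dA" "pder \<psi> dB" "\<And>t. dA (\<iota> t) = dB (\<iota> t)" "\<And>i. i < n \<Longrightarrow> dA (x i) = dB (x i)"
  shows "dA f = dB f"
  using der_unique[OF assms(1) pder_minus[OF assms(2,3)]] assms(4,5) by simp

definition ysig :: "nat \<Rightarrow> nat \<Rightarrow> 'f fps" where
  "ysig i l = (if l = i then fps_const (x l) + fps_X else fps_const (x l))"

lemma nth0_rhom: "rhom (\<lambda>s::'a::comm_ring_1 fps. s $ 0)"
  by (simp add: rhom_def)

lemma PR_sig_nth0: assumes "(q, q') \<in> PR (fps_const \<circ> \<iota>) (ysig i)" shows "q' $ 0 = q"
proof -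
  obtain M c where 1: "q = poly_eval \<iota> n x M c" "q' = poly_eval (fps_const \<circ> \<iota>) n (ysig i) M c"
    using assms by (auto simp: PR_def)
  have "q' $ 0 = poly_eval ((\<lambda>s. s $ 0) \<circ> (fps_const \<circ> \<iota>)) n ((\<lambda>s. s $ 0) \<circ> ysig i) M c"
    using 1(2) poly_eval_hom[OF nth0_rhom] by metis
  also have "(\<lambda>s. s $ 0) \<circ> (fps_const \<circ> \<iota>) = \<iota>" by (auto simp: fun_eq_iff)
  also have "(\<lambda>s. s $ 0) \<circ> ysig i = x" by (auto simp: fun_eq_iff ysig_def)
  finally show ?thesis using 1 by simp
qed

lemma sig_interp: "rff_ext \<iota> n x (fps_const \<circ> \<iota>) (ysig i)"
proof -
  have "rhom (fps_const \<circ> \<iota>)" using iota_rhom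
    by (simp add: rhom_def)
  moreover have "q' * inverse q' = 1" if "(q, q') \<in> PR (fps_const \<circ> \<iota>) (ysig i)" "q \<noteq> 0" for q q'
    using that PR_sig_nth0 inverse_mult_eq_1' by metis
  ultimately show ?thesis unfolding rff_ext_def rff_ext_axioms_def using rff_axioms by blast
qed

definition sig :: "nat \<Rightarrow> 'f \<Rightarrow> 'f fps" where
  "sig i = rff_ext.ext \<iota> n x (fps_const \<circ> \<iota>) (ysig i)"

lemma sig_rhom: "rhom (sig i)"
  unfolding sig_def using rff_ext.ext_rhom[OF sig_interp] .

lemma sig_nth0: "sig i f $ 0 = f"
proof -
  interpret S: rff_ext \<iota> n x "fps_const \<circ> \<iota>" "ysig i" by (rule sig_interp)
  obtain p p' q q' where h: "(p, p') \<in> PR (fps_const \<circ> \<iota>) (ysig i)" "(q, q') \<in> PR (fps_const \<circ> \<iota>) (ysig i)"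
    "q \<noteq> 0" "f = p / q" "S.ext f = p' * inverse q'" using S.ext_rep by blast
  show ?thesis using h PR_sig_nth0[OF h(1)] PR_sig_nth0[OF h(2)] unfolding sig_def
    by (simp add: field_simps)
qed

lemma sig_const: "sig i (\<iota> t) = fps_const (\<iota> t)"
  unfolding sig_def using rff_ext.ext_const[OF sig_interp] by simp

lemma sig_var: "l < n \<Longrightarrow> sig i (x l) = ysig i l"
  unfolding sig_def using rff_ext.ext_var[OF sig_interp] by simp

definition D :: "nat \<Rightarrow> 'f \<Rightarrow> 'f" where
  "D i f = x i * (sig i f $ 1)"

lemma D_pder: "pder id (D i)"
  unfolding pder_def D_def
  by (auto simp: rhomD[OF sig_rhom] fps_mult_nth_1 sig_nth0 algebra_simps)

lemma D_const: "D i (\<iota> t) = 0"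
  by (simp add: D_def sig_const)

lemma D_var: "l < n \<Longrightarrow> D i (x l) = (if l = i then x l else 0)"
  by (simp add: D_def sig_var ysig_def)

lemma D_0: "D i 0 = 0" using pder_0[OF D_pder] .

lemma D_commute: "D i (D j f) = D j (D i f)"
proof -
  have 1: "pder id (\<lambda>f. D i (D j f) - D j (D i f))"
    unfolding pder_def
  proof (intro conjI allI)
    fix a b
    show "D i (D j (a + b)) - D j (D i (a + b)) = D i (D j a) - D j (D i a) + (D i (D j b) - D j (D i b))"
      by (simp add: pderD[OF D_pder])
    show "D i (D j (a * b)) - D j (D i (a * b)) = id a * (D i (D j b) - D j (D i b)) + id b * (D i (D j a) - D j (D i a))"
      by (simp add: pderD[OF D_pder] right_diff_distrib)
  qed
  have r: "rhom (id :: 'f \<Rightarrow> 'f)" by (simp add: rhom_def)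
  have "D i (D j f) - D j (D i f) = 0"
    by (rule der_unique[OF r 1]) (auto simp: D_const D_0 D_var)
  thus ?thesis by simp
qed

end





definition Emap :: "('f::field \<Rightarrow> 'f) \<Rightarrow> 'f fls \<Rightarrow> 'f fls" where
  "Emap d s = Abs_fls (\<lambda>k. d (s $$ k))"

lemma Emap_nth: assumes "d 0 = 0" shows "Emap d s $$ k = d (s $$ k)"
  unfolding Emap_def by (rule nth_Abs_fls_lower_bound[of "fls_subdegree s"]) (simp add: assms)

lemma fls_mult_nth_bound:
  fixes f g :: "'a::field fls"
  assumes "\<forall>k<a. f $$ k = 0" "\<forall>k<b. g $$ k = 0"
  shows "(f * g) $$ n = (\<Sum>i=a..n-b. f $$ i * g $$ (n - i))"
proof (cases "f = 0 \<or> g = 0")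
  case True thus ?thesis by auto
next
  case False
  hence a: "a \<le> fls_subdegree f" using assms(1) nth_fls_subdegree_zero_iff[of f] by (meson not_le)
  from False have b: "b \<le> fls_subdegree g" using assms(2) nth_fls_subdegree_zero_iff[of g] by (meson not_le)
  have "(f * g) $$ n = (\<Sum>i=fls_subdegree f..n - fls_subdegree g. f $$ i * g $$ (n - i))"
    by (rule fls_times_nth(2))
  also have "\<dots> = (\<Sum>i=a..n-b. f $$ i * g $$ (n - i))"
  proof (rule sum.mono_neutral_left)
    show "{fls_subdegree f..n - fls_subdegree g} \<subseteq> {a..n - b}" using a b by auto
    show "\<forall>i\<in>{a..n - b} - {fls_subdegree f..n - fls_subdegree g}. f $$ i * g $$ (n - i) = 0"
    proof
      fix i assume "i \<in> {a..n - b} - {fls_subdegree f..n - fls_subdegree g}"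
      hence "i < fls_subdegree f \<or> n - i < fls_subdegree g" by auto
      thus "f $$ i * g $$ (n - i) = 0" by auto
    qed
  qed simp
  finally show ?thesis .
qed

lemma Emap_pder:
  fixes d :: "'f::field \<Rightarrow> 'f"
  assumes "pder id d"
  shows "pder id (Emap d)"
  unfolding pder_def
proof (intro conjI allI)
  have d0: "d 0 = 0" using pder_0[OF assms] .
  fix s t :: "'f fls"
  show "Emap d (s + t) = Emap d s + Emap d t"
    by (simp add: fls_eq_iff Emap_nth[of d, OF d0] pderD[OF assms])
  show "Emap d (s * t) = id s * Emap d t + id t * Emap d s"
  proof (subst fls_eq_iff, intro allI)
    fix k
    let ?a = "fls_subdegree s" and ?b = "fls_subdegree t"
    have s0: "\<forall>k<?a. s $$ k = 0" and t0: "\<forall>k<?b. t $$ k = 0" by auto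
    have es0: "\<forall>k<?a. Emap d s $$ k = 0" and et0: "\<forall>k<?b. Emap d t $$ k = 0"
      by (auto simp: Emap_nth[of d, OF d0] d0)
    have "Emap d (s * t) $$ k = d (\<Sum>i=?a..k-?b. s $$ i * t $$ (k - i))"
      by (simp add: Emap_nth[of d, OF d0] fls_mult_nth_bound[OF s0 t0])
    also have "\<dots> = (\<Sum>i=?a..k-?b. s $$ i * d (t $$ (k - i))) + (\<Sum>i=?a..k-?b. d (s $$ i) * t $$ (k - i))"
      by (simp add: pder_sum[OF assms] pderD[OF assms] sum.distrib algebra_simps)
    also have "(\<Sum>i=?a..k-?b. s $$ i * d (t $$ (k - i))) = (s * Emap d t) $$ k"
      by (simp add: fls_mult_nth_bound[OF s0 et0] Emap_nth[of d, OF d0])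
    also have "(\<Sum>i=?a..k-?b. d (s $$ i) * t $$ (k - i)) = (Emap d s * t) $$ k"
      by (simp add: fls_mult_nth_bound[OF es0 t0] Emap_nth[of d, OF d0])
    finally show "Emap d (s * t) $$ k = (id s * Emap d t + id t * Emap d s) $$ k"
      by (simp add: mult.commute)
  qed
qed

lemma Emap_const: "d 0 = 0 \<Longrightarrow> Emap d (fls_const a) = fls_const (d a)"
  by (simp add: fls_eq_iff Emap_nth)

lemma Emap_X: "d 0 = 0 \<Longrightarrow> d 1 = 0 \<Longrightarrow> Emap d fls_X = 0"
  by (simp add: fls_eq_iff Emap_nth)

lemma fls_sum_nth: "(\<Sum>i\<in>A. f i) $$ k = (\<Sum>i\<in>A. f i $$ k)"
proof (cases "finite A")
  case True thus ?thesis by induct auto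
qed simp

lemma poly_at_rhom: "rhom (\<lambda>p. poly p a)"
  by (simp add: rhom_def)

definition hfl :: "'a::field poly \<Rightarrow> 'a fls" where
  "hfl p = fps_to_fls (fps_of_poly p)"

lemma hfl_rhom: "rhom hfl"
  by (simp add: rhom_def hfl_def fps_of_poly_add fps_of_poly_mult fls_times_fps_to_fls)

context rff
begin



definition yrho :: "nat \<Rightarrow> nat \<Rightarrow> 'f fls" where
  "yrho j l = (if l = j then fls_X else fls_const (x l))"

definition ypol :: "nat \<Rightarrow> nat \<Rightarrow> 'f poly" where
  "ypol j l = (if l = j then [:0, 1:] else [:x l:])"

lemma PR_rho_nz:
  assumes "(q, q') \<in> PR (fls_const \<circ> \<iota>) (yrho j)" "q \<noteq> 0"
  shows "q' \<noteq> 0"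
proof
  assume q0: "q' = 0"
  obtain M c where 1: "q = poly_eval \<iota> n x M c" "q' = poly_eval (fls_const \<circ> \<iota>) n (yrho j) M c"
    using assms by (auto simp: PR_def)
  define q'' where "q'' = poly_eval (\<lambda>t. [:\<iota> t:]) n (ypol j) M c"
  have "hfl q'' = poly_eval (hfl \<circ> (\<lambda>t. [:\<iota> t:])) n (hfl \<circ> ypol j) M c"
    unfolding q''_def by (rule poly_eval_hom[OF hfl_rhom])
  also have "hfl \<circ> (\<lambda>t. [:\<iota> t:]) = fls_const \<circ> \<iota>"
    by (auto simp: fun_eq_iff hfl_def fps_of_poly_const)
  also have "hfl \<circ> ypol j = yrho j"
    by (auto simp: fun_eq_iff hfl_def fps_of_poly_const ypol_def yrho_def)
  finally have "hfl q'' = 0" using 1 q0 by (simp add: o_def)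
  hence q''0: "q'' = 0" by (simp add: hfl_def fps_of_poly_eq_iff[of q'' 0, simplified])
  have "poly q'' (x j) = poly_eval ((\<lambda>p. poly p (x j)) \<circ> (\<lambda>t. [:\<iota> t:])) n ((\<lambda>p. poly p (x j)) \<circ> ypol j) M c"
    unfolding q''_def by (rule poly_eval_hom[OF poly_at_rhom])
  also have "(\<lambda>p. poly p (x j)) \<circ> (\<lambda>t. [:\<iota> t:]) = \<iota>" by (auto simp: fun_eq_iff)
  also have "(\<lambda>p. poly p (x j)) \<circ> ypol j = x" by (auto simp: fun_eq_iff ypol_def)
  finally show False using q''0 1 assms(2) by simp
qed

lemma rho_interp: "rff_ext \<iota> n x (fls_const \<circ> \<iota>) (yrho j)"
proof -
  have "rhom (fls_const \<circ> \<iota>)" using iota_rhom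
    by (auto simp: rhom_def fls_plus_const fls_const_mult_const)
  moreover have "q' * inverse q' = 1" if "(q, q') \<in> PR (fls_const \<circ> \<iota>) (yrho j)" "q \<noteq> 0" for q q'
    using PR_rho_nz[OF that] by simp
  ultimately show ?thesis unfolding rff_ext_def rff_ext_axioms_def using rff_axioms by blast
qed

definition rho :: "nat \<Rightarrow> 'f \<Rightarrow> 'f fls" where
  "rho j = rff_ext.ext \<iota> n x (fls_const \<circ> \<iota>) (yrho j)"

lemma rho_rhom: "rhom (rho j)"
  unfolding rho_def using rff_ext.ext_rhom[OF rho_interp] .

lemma rho_const: "rho j (\<iota> t) = fls_const (\<iota> t)"
  unfolding rho_def using rff_ext.ext_const[OF rho_interp] by simp

lemma rho_var: "l < n \<Longrightarrow> rho j (x l) = yrho j l"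
  unfolding rho_def using rff_ext.ext_var[OF rho_interp] by simp

lemma D_1: "D i 1 = 0"
  using D_const[of i 1] rhomD(1)[OF iota_rhom] by simp

lemma rho_D_other:
  assumes "i \<noteq> j"
  shows "rho j (D i h) = Emap (D i) (rho j h)"
proof (rule der_unique2[OF rho_rhom])
  show "pder (rho j) (\<lambda>h. rho j (D i h))"
    unfolding pder_def by (simp add: pderD[OF D_pder] rhomD[OF rho_rhom])
  show "pder (rho j) (\<lambda>h. Emap (D i) (rho j h))"
    using Emap_pder[OF D_pder[of i]] unfolding pder_def by (simp add: rhomD[OF rho_rhom])
  show "rho j (D i (\<iota> t)) = Emap (D i) (rho j (\<iota> t))" for t
    by (simp add: D_const rho_const Emap_const D_0 rhom_0[OF rho_rhom])
  show "rho j (D i (x l)) = Emap (D i) (rho j (x l))" if "l < n" for l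
    using that assms
    by (auto simp: D_var rho_var yrho_def Emap_X Emap_const D_0 D_1 rhom_0[OF rho_rhom])
qed

lemma rho_D_same:
  shows "rho j (D j h) = fls_X * fls_deriv (rho j h)"
proof (rule der_unique2[OF rho_rhom])
  show "pder (rho j) (\<lambda>h. rho j (D j h))"
    unfolding pder_def by (simp add: pderD[OF D_pder] rhomD[OF rho_rhom])
  show "pder (rho j) (\<lambda>h. fls_X * fls_deriv (rho j h))"
    unfolding pder_def by (simp add: rhomD[OF rho_rhom] algebra_simps)
  show "rho j (D j (\<iota> t)) = fls_X * fls_deriv (rho j (\<iota> t))" for t
    by (simp add: D_const rho_const rhom_0[OF rho_rhom])
  show "rho j (D j (x l)) = fls_X * fls_deriv (rho j (x l))" if "l < n" for l
    using that by (auto simp: D_var rho_var yrho_def rhom_0[OF rho_rhom])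
qed

definition cterm :: "nat \<Rightarrow> 'f \<Rightarrow> 'f" where
  "cterm j h = rho j h $$ 0"

lemma cterm_add: "cterm j (a + b) = cterm j a + cterm j b"
  by (simp add: cterm_def rhomD[OF rho_rhom])

lemma cterm_sum: "cterm j (\<Sum>i\<in>A. f i) = (\<Sum>i\<in>A. cterm j (f i))"
  by (simp add: cterm_def rhom_sum[OF rho_rhom] fls_sum_nth)

lemma cterm_1: "cterm j 1 = 1"
  by (simp add: cterm_def rhomD[OF rho_rhom])

lemma cterm_D_same: "cterm j (D j h) = 0"
  by (simp add: cterm_def rho_D_same fls_X_times_conv_shift fls_deriv_residue)

lemma cterm_D_other: "i \<noteq> j \<Longrightarrow> cterm j (D i h) = D i (cterm j h)"
  by (simp add: cterm_def rho_D_other Emap_nth D_0)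

lemma no_sum_D_one: "j \<le> n \<Longrightarrow> (\<Sum>i<j. D i (H i)) \<noteq> 1"
proof (induct j arbitrary: H)
  case 0 thus ?case by simp
next
  case (Suc j)
  show ?case
  proof
    assume h: "(\<Sum>i<Suc j. D i (H i)) = 1"
    have "cterm j (\<Sum>i<Suc j. D i (H i)) = 1" using h cterm_1 by simp
    hence "(\<Sum>i<j. cterm j (D i (H i))) + cterm j (D j (H j)) = 1"
      by (simp add: cterm_sum cterm_add)
    hence "(\<Sum>i<j. D i (cterm j (H i))) = 1"
      by (simp add: cterm_D_same cterm_D_other)
    thus False using Suc.hyps[of "\<lambda>i. cterm j (H i)"] Suc.prems by simp
  qed
qed

end



lemma sum_delta_mult: "l < (n::nat) \<Longrightarrow> (\<Sum>i<n. c i * (if l = i then a else 0)) = c l * (a::'a::comm_ring_1)"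
proof -
  assume l: "l < n"
  have "(\<Sum>i<n. c i * (if l = i then a else 0)) = (\<Sum>i<n. if l = i then c i * a else 0)"
    by (rule sum.cong) auto
  also have "\<dots> = c l * a" using l sum.delta'[of "{..<n}" l "\<lambda>i. c i * a"] by simp
  finally show ?thesis .
qed

context rff
begin

lemma D_sum: "D i (\<Sum>j\<in>A. f j) = (\<Sum>j\<in>A. D i (f j))"
  using pder_sum[OF D_pder] .

lemma D_mult: "D i (a * b) = a * D i b + b * D i a"
  using pderD(2)[OF D_pder] by simp

lemma D_add: "D i (a + b) = D i a + D i b"
  using pderD(1)[OF D_pder] .

lemma D_cmult: "D i (\<iota> c * a) = \<iota> c * D i a"
  by (simp add: D_mult D_const)

lemma id_rhom: "rhom (id :: 'f \<Rightarrow> 'f)" by (simp add: rhom_def)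

lemma bracket_formula:
  assumes PB: "poisson_bracket \<iota> br" and LB: "lambda_bracket \<iota> n x lam br"
    and AS: "\<forall>i<n. \<forall>j<n. lam i j = - lam j i" and two: "(2::'f) \<noteq> 0"
  shows "br f g = (\<Sum>i<n. D i (f * (\<Sum>j<n. \<iota> (lam i j) * D j g)))"
proof -
  have add1: "br (a + b) c = br a c + br b c" for a b c using PB unfolding poisson_bracket_def by blast
  have anti: "br a b = - br b a" for a b using PB unfolding poisson_bracket_def by blast
  have lin: "br (\<iota> t * a) b = \<iota> t * br a b" for t a b using PB unfolding poisson_bracket_def by blast
  have lb2: "br a (b * c) = br a b * c + b * br a c" for a b c using PB unfolding poisson_bracket_def by blast
  have add2: "br a (b + c) = br a b + br a c" for a b c using add1 anti by (metis minus_add_distrib)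
  have lb1: "br (a * b) c = a * br b c + b * br a c" for a b c
    using lb2[of c a b] anti[of "a * b" c] anti[of a c] anti[of b c] by (simp add: algebra_simps)
  have br1: "br a 1 = 0" for a
  proof -
    have "br a 1 = br a 1 + br a 1" using lb2[of a 1 1] by simp
    thus ?thesis by (metis add_cancel_right_right)
  qed
  have brc1: "br (\<iota> t) a = 0" for t a
    using lin[of t 1 a] anti[of 1 a] br1[of a] by simp
  have brc2: "br a (\<iota> t) = 0" for t a using anti[of a "\<iota> t"] brc1 by simp
  have xx: "br (x l) (x j) = \<iota> (lam l j) * x l * x j" if "l < n" "j < n" for l j
    using LB that by (simp add: lambda_bracket_def)
  define C where "C f j = (\<Sum>i<n. \<iota> (lam i j) * D i f)" for f j
  have Cpder: "pder id (\<lambda>f. C f j)" for j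
    unfolding pder_def C_def
    by (simp add: D_add D_mult sum.distrib sum_distrib_left algebra_simps)
  have step1: "br f (x j) = x j * C f j" if j: "j < n" for f j
  proof (rule der_unique2[OF id_rhom, where dA = "\<lambda>f. br f (x j)" and dB = "\<lambda>f. x j * C f j"])
    show "pder id (\<lambda>f. br f (x j))" unfolding pder_def by (simp add: add1 lb1)
    show "pder id (\<lambda>f. x j * C f j)" using Cpder[of j] unfolding pder_def by (simp add: algebra_simps)
    show "br (\<iota> t) (x j) = x j * C (\<iota> t) j" for t by (simp add: brc1 C_def D_const)
    show "br (x l) (x j) = x j * C (x l) j" if "l < n" for l
      using that j by (simp add: xx C_def D_var sum_delta_mult)
  qed
  have step2: "br f g = (\<Sum>j<n. C f j * D j g)"
  proof (rule der_unique2[OF id_rhom, where dA = "\<lambda>g. br f g" and dB = "\<lambda>g. \<Sum>j<n. C f j * D j g"])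
    show "pder id (br f)" unfolding pder_def by (simp add: add2 lb2 algebra_simps)
    show "pder id (\<lambda>g. \<Sum>j<n. C f j * D j g)" unfolding pder_def
      by (simp add: D_add D_mult sum.distrib sum_distrib_left algebra_simps)
    show "br f (\<iota> t) = (\<Sum>j<n. C f j * D j (\<iota> t))" for t by (simp add: brc2 D_const)
    show "br f (x l) = (\<Sum>j<n. C f j * D j (x l))" if "l < n" for l
      using that by (simp add: step1 D_var sum_delta_mult mult.commute)
  qed
  define T where "T = (\<Sum>i<n. \<Sum>j<n. \<iota> (lam i j) * D i (D j g))"
  have s1: "T = (\<Sum>j<n. \<Sum>i<n. \<iota> (lam i j) * D i (D j g))" unfolding T_def by (rule sum.swap)
  have s2: "(\<Sum>j<n. \<Sum>i<n. \<iota> (lam i j) * D i (D j g)) = (\<Sum>j<n. \<Sum>i<n. - (\<iota> (lam j i) * D j (D i g)))"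
  proof (intro sum.cong refl)
    fix j i assume "j \<in> {..<n}" "i \<in> {..<n}"
    hence l: "lam i j = - lam j i" using AS by blast
    show "\<iota> (lam i j) * D i (D j g) = - (\<iota> (lam j i) * D j (D i g))"
      by (simp only: l rhom_uminus[OF iota_rhom] D_commute[of i j] mult_minus_left)
  qed
  have s3: "(\<Sum>j<n. \<Sum>i<n. - (\<iota> (lam j i) * D j (D i g))) = - T" unfolding T_def by (simp only: sum_negf)
  have eqT: "T = - T" by (rule trans[OF s1 trans[OF s2 s3]])
  have "T + T = 0" using eqT by (metis neg_eq_iff_add_eq_0)
  hence "2 * T = 0" by (simp only: mult_2)
  hence T0: "T = 0" using two by simp
  define S where "S i = (\<Sum>j<n. \<iota> (lam i j) * D j g)" for i
  have e1: "D i (f * S i) = f * (\<Sum>j<n. \<iota> (lam i j) * D i (D j g)) + S i * D i f" for i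
    unfolding S_def by (simp only: D_mult D_sum D_const mult_zero_right add_0_right)
  have "(\<Sum>i<n. D i (f * S i)) = (\<Sum>i<n. f * (\<Sum>j<n. \<iota> (lam i j) * D i (D j g))) + (\<Sum>i<n. S i * D i f)"
    by (simp only: e1 sum.distrib)
  also have "(\<Sum>i<n. f * (\<Sum>j<n. \<iota> (lam i j) * D i (D j g))) = f * T"
    unfolding T_def by (simp only: sum_distrib_left)
  also have "(\<Sum>i<n. S i * D i f) = (\<Sum>i<n. \<Sum>j<n. \<iota> (lam i j) * D i f * D j g)"
    unfolding S_def sum_distrib_right by (intro sum.cong refl) (simp only: mult_ac)
  also have "\<dots> = (\<Sum>j<n. \<Sum>i<n. \<iota> (lam i j) * D i f * D j g)" by (rule sum.swap)
  also have "\<dots> = (\<Sum>j<n. C f j * D j g)"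
    unfolding C_def sum_distrib_right by (rule refl)
  finally show ?thesis using step2 T0 unfolding S_def by simp
qed

end

theorem corollary5p3:
  fixes \<iota> :: "'k::field_char_0 \<Rightarrow> 'f::field" and x :: "nat \<Rightarrow> 'f" and n :: nat
    and lam :: "nat \<Rightarrow> nat \<Rightarrow> 'k" and br :: "'f \<Rightarrow> 'f \<Rightarrow> 'f"
    and \<iota>' :: "'k \<Rightarrow> 'g::field" and br' :: "'g \<Rightarrow> 'g \<Rightarrow> 'g" and \<phi> :: "'f \<Rightarrow> 'g"
  assumes "\<forall>i<n. \<forall>j<n. lam i j = - lam j i"
    and "rational_function_field \<iota> n x"
    and "poisson_bracket \<iota> br"
    and "lambda_bracket \<iota> n x lam br"
    and "poisson_field \<iota>' br'"
    and "poisson_iso \<iota> br \<iota>' br' \<phi>"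
  shows "\<not> (\<exists>a b. br' a b = 1)"
proof
  assume "\<exists>a b. br' a b = 1"
  then obtain a b where ab: "br' a b = 1" by blast
  interpret rff \<iota> n x using assms(2) by unfold_locales
  have two: "(2::'f) \<noteq> 0"
  proof
    assume "(2::'f) = 0"
    have "\<iota> 2 = \<iota> 1 + \<iota> 1" using rhomD(2)[OF iota_rhom, of 1 1] by simp
    hence "\<iota> 2 = 0" using \<open>(2::'f) = 0\<close> rhomD(1)[OF iota_rhom] by simp
    thus False using rhom_field_nz[OF iota_rhom, of 2] by simp
  qed
  have bij: "bij \<phi>" and hb: "\<And>a b. \<phi> (br a b) = br' (\<phi> a) (\<phi> b)" and hc: "\<And>t. \<phi> (\<iota> t) = \<iota>' t"
    using assms(6) by (auto simp: poisson_iso_def)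
  define f where "f = inv \<phi> a"
  define g where "g = inv \<phi> b"
  have "\<phi> (br f g) = 1" using hb ab bij unfolding f_def g_def by (simp add: surj_f_inv_f bij_is_surj)
  moreover have "\<phi> 1 = 1" using hc[of 1] rhomD(1)[OF iota_rhom] assms(5)
    by (simp add: poisson_field_def field_embedding_def)
  ultimately have "br f g = 1" using bij by (metis bij_def inj_eq)
  moreover have "br f g = (\<Sum>i<n. D i (f * (\<Sum>j<n. \<iota> (lam i j) * D j g)))"
    by (rule bracket_formula[OF assms(3) assms(4) assms(1) two])
  ultimately show False using no_sum_D_one[of n "\<lambda>i. f * (\<Sum>j<n. \<iota> (lam i j) * D j g)"] by simp
qed



end
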